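(* Let $G\cong\mathbb{Z}_m\times Q_{2^n}$, where $m$ is odd and $n\ge 3$. Then the difference graph $\mathcal{D}(G)$ is connected and has diameter at most $3$.
   Context: For a finite group $G$ with identity $e$: the intersection power graph $\mathcal{G}_I(G)$ has vertex set $G$, two distinct non-identity vertices $x,y$ being adjacent iff $\langle x\rangle\cap\langle y\rangle\neq\{e\}$, and $e$ being adjacent to every other vertex. The power graph $\mathcal{P}(G)$ has vertex set $G$, two distinct vertices being adjacent iff one is a power of the other. The difference graph $\mathcal{D}(G)$ is the graph on vertex set $G$ with edge set $E(\mathcal{G}_I(G))\setminus E(\mathcal{P}(G))$, with all isolated vertices removed. $Q_{2^n}$ is the generalized quaternion group $\langle x,y\mid x^{2^{n-1}}=1,\ y^2=x^{2^{n-2}},\ y^{-1}xy=x^{-1}\rangle$ of order $2^n$. *)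

theory Defs
  imports "HOL-Algebra.Algebra"
begin

text \<open>Concrete model of the generalized quaternion group Q_{2^n}:
  the pair (a,b) with 0 \<le> a < 2^(n-1), b \<in> {0,1} stands for x^a y^b, where
  x^(2^(n-1)) = 1, y^2 = x^(2^(n-2)), y^-1 x y = x^-1 (so y x^c = x^-c y).\<close>
definition quaternion_group :: "nat \<Rightarrow> (int \<times> int) monoid" where
  "quaternion_group n =
     \<lparr> carrier = {0..<2^(n-1)} \<times> {0,1},
       monoid.mult = (\<lambda>p q.
          ((fst p + (if snd p = 0 then fst q else - fst q)
              + (if snd p = 1 \<and> snd q = 1 then 2^(n-2) else 0)) mod 2^(n-1),
           (snd p + snd q) mod 2)),
       one = (0,0) \<rparr>"

definition ipg_adj :: "('a, 'b) monoid_scheme \<Rightarrow> 'a \<Rightarrow> 'a \<Rightarrow> bool" where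
  "ipg_adj G x y \<longleftrightarrow> x \<in> carrier G \<and> y \<in> carrier G \<and> x \<noteq> y \<and>
     (x = \<one>\<^bsub>G\<^esub> \<or> y = \<one>\<^bsub>G\<^esub> \<or> generate G {x} \<inter> generate G {y} \<noteq> {\<one>\<^bsub>G\<^esub>})"

definition pg_adj :: "('a, 'b) monoid_scheme \<Rightarrow> 'a \<Rightarrow> 'a \<Rightarrow> bool" where
  "pg_adj G x y \<longleftrightarrow> x \<in> carrier G \<and> y \<in> carrier G \<and> x \<noteq> y \<and>
     ((\<exists>k::nat. y = x [^]\<^bsub>G\<^esub> k) \<or> (\<exists>k::nat. x = y [^]\<^bsub>G\<^esub> k))"

definition diff_edges :: "('a, 'b) monoid_scheme \<Rightarrow> ('a \<times> 'a) set" where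
  "diff_edges G = {(x, y). ipg_adj G x y \<and> \<not> pg_adj G x y}"

definition diff_vertices :: "('a, 'b) monoid_scheme \<Rightarrow> 'a set" where
  "diff_vertices G = {x. \<exists>y. (x, y) \<in> diff_edges G}"

end

theory Submission imports Defs begin

lemma Q_mult: "(c,e) \<otimes>\<^bsub>quaternion_group n\<^esub> (d,f) =
  ((c + (if e = 0 then d else - d) + (if e = 1 \<and> f = 1 then 2^(n-2) else 0)) mod 2^(n-1), (e + f) mod 2)"
  by (simp add: quaternion_group_def)

lemma Q_one: "\<one>\<^bsub>quaternion_group n\<^esub> = (0,0)"
  by (simp add: quaternion_group_def)

lemma Q_carrier: "carrier (quaternion_group n) = {0..<2^(n-1)} \<times> {0,1}"
  by (simp add: quaternion_group_def)

lemma Q_pow0: "(c,0) [^]\<^bsub>quaternion_group n\<^esub> (k::nat) = ((int k * c) mod 2^(n-1), 0)"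
proof (induction k)
  case 0 then show ?case by (simp add: Q_one)
next
  case (Suc k) then show ?case by (simp add: Q_mult mod_add_right_eq distrib_right add.commute)
qed

lemma N_eq: "n \<ge> 3 \<Longrightarrow> (2::int)^(n-1) = 2 * 2^(n-2)"
proof -
  assume "n \<ge> 3"
  then have "n - 1 = Suc (n-2)" by arith
  then show ?thesis by simp
qed

lemma Q_pow1:
  assumes "n \<ge> 3" "0 \<le> c" "c < 2^(n-1)"
  shows "(c,1) [^]\<^bsub>quaternion_group n\<^esub> (k::nat) =
    (if k mod 4 = 0 then (0,0) else if k mod 4 = 1 then (c,1) else if k mod 4 = 2 then (2^(n-2),0)
     else ((c + 2^(n-2)) mod 2^(n-1), 1))"
proof (induction k)
  case 0 then show ?case by (simp add: Q_one)
next
  case (Suc k)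
  define h :: int where "h = 2^(n-2)"
  have N: "(2::int)^(n-1) = 2*h" "(2::int)^(n - Suc 0) = 2*h" using N_eq[OF assms(1)] h_def by simp_all
  have e4: "((c + h) mod (2 * h) - c + h) mod (2*h) = 0"
  proof -
    have "((c + h) mod (2 * h) - c + h) mod (2*h) = ((c + h) mod (2 * h) + (h - c)) mod (2*h)" by (simp add: algebra_simps)
    also have "\<dots> = ((c + h) + (h - c)) mod (2*h)" by (simp add: mod_add_left_eq)
    also have "\<dots> = 0" by simp
    finally show ?thesis .
  qed
  have hc: "h + c = c + h" by simp
  have hpos: "h > 0" by (simp add: h_def)
  have cm: "c mod (2*h) = c" using assms N by simp
  have hm: "h mod (2*h) = h" using hpos by simp
  have "k mod 4 = 0 \<or> k mod 4 = 1 \<or> k mod 4 = 2 \<or> k mod 4 = 3" by arith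
  moreover have "Suc k mod 4 = (if k mod 4 = 3 then 0 else Suc (k mod 4))" by (simp add: mod_Suc)
  ultimately show ?case using Suc
    apply (simp only: N flip: h_def)
    apply (elim disjE)
    apply (simp_all add: Q_mult cm hm N e4 hc flip: h_def)
    done
qed

lemma DirProd_pow: "(a, q) [^]\<^bsub>G \<times>\<times> K\<^esub> (k::nat) = (a [^]\<^bsub>G\<^esub> k, q [^]\<^bsub>K\<^esub> k)"
  by (induction k) simp_all

definition dedge :: "('a, 'b) monoid_scheme \<Rightarrow> 'a \<Rightarrow> 'a \<Rightarrow> bool" where
  "dedge G x y \<longleftrightarrow> x \<in> carrier G \<and> y \<in> carrier G \<and> x \<noteq> y \<and>
     (\<exists>(i::nat) (j::nat). x [^]\<^bsub>G\<^esub> i = y [^]\<^bsub>G\<^esub> j \<and> x [^]\<^bsub>G\<^esub> i \<noteq> \<one>\<^bsub>G\<^esub>) \<and>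
     \<not>(\<exists>k::nat. y = x [^]\<^bsub>G\<^esub> k) \<and> \<not>(\<exists>k::nat. x = y [^]\<^bsub>G\<^esub> k)"

lemma dedge_sym: "dedge G x y \<Longrightarrow> dedge G y x"
  unfolding dedge_def by metis

lemma odd_part: "0 < (c::int) \<Longrightarrow> \<exists>s t. c = 2^s * t \<and> odd t"
proof (induction "nat c" arbitrary: c rule: less_induct)
  case less
  show ?case
  proof (cases "odd c")
    case True then show ?thesis by (metis power_0 mult_1)
  next
    case False
    then obtain c' where c': "c = 2 * c'" by blast
    with less.prems have "0 < c'" "nat c' < nat c" by simp_all
    from less.hyps[OF this(2) this(1)] obtain s t where "c' = 2^s * t" "odd t" by blast
    with c' have "c = 2^(Suc s) * t" by simp
    with \<open>odd t\<close> show ?thesis by blast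
  qed
qed

lemma odd_times_half:
  fixes h :: int assumes "h > 0" "odd t"
  shows "(h * t) mod (2*h) = h"
proof -
  obtain r where t: "t = 2*r + 1" using assms(2) by (metis oddE)
  have "h * t = h + r * (2*h)" by (simp add: t algebra_simps)
  then have "(h * t) mod (2*h) = h mod (2*h)" by simp
  also have "\<dots> = h" using assms by simp
  finally show ?thesis .
qed

lemma two_adic:
  assumes "n \<ge> 3" "0 < c" "c < (2::int)^(n-1)" "odd m"
  shows "\<exists>k::nat. (int m * 2^k * c) mod 2^(n-1) = 2^(n-2)"
proof -
  obtain s t where st: "c = 2^s * t" "odd t" using odd_part[OF assms(2)] by blast
  have "t > 0" using assms(2) st by (smt (verit) zero_less_mult_pos zero_less_power)
  then have "(2::int)^s \<le> c" using st by simp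
  with assms(3) have "(2::int)^s < 2^(n-1)" by linarith
  then have "s < n - 1" using power_strict_increasing_iff[of "2::int" s "n-1"] by simp
  then have sk: "(n-2-s) + s = n - 2" by arith
  have p: "(2::int)^(n-2-s) * 2^s = 2^(n-2)" by (metis power_add sk)
  have "int m * 2^(n-2-s) * c = int m * t * (2^(n-2-s) * 2^s)"
    by (simp add: st algebra_simps)
  also have "\<dots> = 2^(n-2) * (int m * t)" by (simp only: p) (simp add: algebra_simps)
  finally have e: "int m * 2^(n-2-s) * c = 2^(n-2) * (int m * t)" .
  have "odd (int m * t)" using assms(4) st by simp
  then have "(2^(n-2) * (int m * t)) mod (2 * 2^(n-2)) = 2^(n-2)"
    using odd_times_half[of "2^(n-2)" "int m * t"] by simp
  then have "(int m * 2^(n-2-s) * c) mod (2 * 2^(n-2)) = 2^(n-2)" by (simp only: e)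
  then show ?thesis using N_eq[OF assms(1)] by metis
qed


lemma odd_2m_mod4: "odd (m::nat) \<Longrightarrow> (2*m) mod 4 = 2"
proof -
  assume "odd m"
  then obtain r where "m = 2*r+1" by (metis oddE)
  then show ?thesis by presburger
qed

context
  fixes m n :: nat
  assumes mo: "odd m" and n3: "n \<ge> 3"
begin

abbreviation "HH \<equiv> integer_mod_group m \<times>\<times> quaternion_group n"

definition hh :: int where "hh = 2^(n-2)"

lemma hh_ge: "hh \<ge> 2"
proof -
  have "(2::int)^1 \<le> 2^(n-2)" using n3 by (intro power_increasing) auto
  then show ?thesis by (simp add: hh_def)
qed

lemma hh_ne: "hh \<noteq> 1" "1 \<noteq> hh" "hh \<noteq> 0" "hh > 0" using hh_ge by auto

lemma NN: "(2::int)^(n-1) = 2*hh" "(2::int)^(n - Suc 0) = 2*hh"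
  using N_eq[OF n3] by (simp_all add: hh_def)

lemma m_pos: "m > 0" using mo by (cases m) auto

lemma HH_carrier: "carrier HH = {0..<int m} \<times> ({0..<2*hh} \<times> {0,1})"
  using m_pos by (simp add: carrier_integer_mod_group Q_carrier NN)

lemma HH_one: "\<one>\<^bsub>HH\<^esub> = (0,(0,0))"
  by (simp add: Q_one)

lemma pow_x: "(a,(c,0)) [^]\<^bsub>HH\<^esub> (k::nat) = ((int k * a) mod int m, ((int k * c) mod (2*hh), 0))"
  by (simp add: DirProd_pow Q_pow0 NN)

lemma pow_y: "0 \<le> c \<Longrightarrow> c < 2*hh \<Longrightarrow> (a,(c,1)) [^]\<^bsub>HH\<^esub> (k::nat) = ((int k * a) mod int m,
    (if k mod 4 = 0 then (0,0) else if k mod 4 = 1 then (c,1) else if k mod 4 = 2 then (hh,0)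
     else ((c + hh) mod (2*hh), 1)))"
  using Q_pow1[OF n3, of c k] by (simp add: DirProd_pow NN hh_def)

lemma y_sq: "0 \<le> c \<Longrightarrow> c < 2*hh \<Longrightarrow> a \<in> {0..<int m} \<Longrightarrow> (a,(c,1)) [^]\<^bsub>HH\<^esub> (2*m) = (0,(hh,0))"
  by (simp add: pow_y odd_2m_mod4[OF mo])

lemma y_pow_snd: "0 \<le> c \<Longrightarrow> c < 2*hh \<Longrightarrow>
  snd ((a,(c,1)) [^]\<^bsub>HH\<^esub> (k::nat)) \<in> {(0,0),(c,1),(hh,0),((c+hh) mod (2*hh),1)}"
  by (simp add: pow_y)

lemma y_pow_fst: "fst ((a,(c,e)) [^]\<^bsub>HH\<^esub> (k::nat)) = (int k * a) mod int m"
  by (simp add: DirProd_pow)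

lemma E1:
  assumes "a \<in> {0..<int m}" "0 \<le> c" "c < 2*hh"
  shows "dedge HH (a,(c,1)) (0,(1,0))"
  unfolding dedge_def
proof (intro conjI)
  show "(a,(c,1)) \<in> carrier HH" "(0::int,(1::int,0::int)) \<in> carrier HH"
    using assms hh_ge m_pos by (simp_all only: HH_carrier) auto
  show "(a,(c,1::int)) \<noteq> (0,(1::int,0::int))" by simp
  have "(0::int,(1::int,0::int)) [^]\<^bsub>HH\<^esub> ((2::nat)^(n-2)) = (0,(hh,0))"
    using hh_ge by (simp add: pow_x hh_def)
  then show "\<exists>(i::nat) (j::nat). (a,(c,1)) [^]\<^bsub>HH\<^esub> i = (0,(1,0)) [^]\<^bsub>HH\<^esub> j \<and> (a,(c,1)) [^]\<^bsub>HH\<^esub> i \<noteq> \<one>\<^bsub>HH\<^esub>"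
    using y_sq[OF assms(2,3,1)] hh_ne by (metis HH_one prod.inject)
  show "\<not>(\<exists>k::nat. (0,(1,0)) = (a,(c,1)) [^]\<^bsub>HH\<^esub> k)"
    using assms hh_ne by (auto simp: pow_y)
  show "\<not>(\<exists>k::nat. (a,(c,1)) = (0,(1,0)) [^]\<^bsub>HH\<^esub> k)"
    by (auto simp: pow_x)
qed


lemma E5:
  assumes "b1 \<in> {0..<int m}" "b2 \<in> {0..<int m}" "0 \<le> c1" "c1 < 2*hh" "0 \<le> c2" "c2 < 2*hh"
    "c1 \<noteq> c2" "c2 \<noteq> (c1 + hh) mod (2*hh)" "c1 \<noteq> (c2 + hh) mod (2*hh)"
  shows "dedge HH (b1,(c1,1)) (b2,(c2,1))"
  unfolding dedge_def
proof (intro conjI)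
  show "(b1,(c1,1)) \<in> carrier HH" "(b2,(c2,1)) \<in> carrier HH"
    using assms by (simp_all only: HH_carrier) auto
  show "(b1,(c1,1::int)) \<noteq> (b2,(c2,1))" using assms by simp
  show "\<exists>(i::nat) (j::nat). (b1,(c1,1)) [^]\<^bsub>HH\<^esub> i = (b2,(c2,1)) [^]\<^bsub>HH\<^esub> j \<and> (b1,(c1,1)) [^]\<^bsub>HH\<^esub> i \<noteq> \<one>\<^bsub>HH\<^esub>"
    using y_sq[OF assms(3,4,1)] y_sq[OF assms(5,6,2)] hh_ne by (metis HH_one prod.inject)
  show "\<not>(\<exists>k::nat. (b2,(c2,1)) = (b1,(c1,1)) [^]\<^bsub>HH\<^esub> k)"
  proof
    assume "\<exists>k::nat. (b2,(c2,1)) = (b1,(c1,1)) [^]\<^bsub>HH\<^esub> k"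
    then obtain k :: nat where eq: "(b2,(c2,1)) = (b1,(c1,1)) [^]\<^bsub>HH\<^esub> k" by blast
    have "snd ((b1,(c1,1)) [^]\<^bsub>HH\<^esub> k) = (c2,1)" by (simp add: eq[symmetric])
    then have "c2 = c1 \<or> c2 = (c1 + hh) mod (2 * hh)"
      using y_pow_snd[OF assms(3,4), of b1 k] by simp
    then show False using assms by auto
  qed
  show "\<not>(\<exists>k::nat. (b1,(c1,1)) = (b2,(c2,1)) [^]\<^bsub>HH\<^esub> k)"
  proof
    assume "\<exists>k::nat. (b1,(c1,1)) = (b2,(c2,1)) [^]\<^bsub>HH\<^esub> k"
    then obtain k :: nat where eq: "(b1,(c1,1)) = (b2,(c2,1)) [^]\<^bsub>HH\<^esub> k" by blast
    have "snd ((b2,(c2,1)) [^]\<^bsub>HH\<^esub> k) = (c1,1)" by (simp add: eq[symmetric])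
    then have "c1 = c2 \<or> c1 = (c2 + hh) mod (2 * hh)"
      using y_pow_snd[OF assms(5,6), of b2 k] by simp
    then show False using assms by auto
  qed
qed

lemma E2:
  assumes "a \<in> {0..<int m}" "0 < c" "c < 2*hh" "(a,(c,0)) \<noteq> (0,(hh,0))"
  shows "dedge HH (a,(c,0)) (0,(0,1))"
  unfolding dedge_def
proof (intro conjI)
  show "(a,(c,0)) \<in> carrier HH" "(0::int,(0::int,1::int)) \<in> carrier HH"
    using assms m_pos hh_ge by (simp_all only: HH_carrier) auto
  show "(a,(c,0::int)) \<noteq> (0,(0,1))" by simp
  obtain k where k: "(int m * 2^k * c) mod (2*hh) = hh"
    using two_adic[OF n3 assms(2) _ mo] assms(3) by (metis NN(1) hh_def)
  have "(a,(c,0)) [^]\<^bsub>HH\<^esub> (m * 2^k) = (0,(hh,0))"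
    using k by (simp add: pow_x)
  moreover have "(0::int,(0::int,1::int)) [^]\<^bsub>HH\<^esub> (2::nat) = (0,(hh,0))"
    using hh_ge by (simp add: pow_y)
  ultimately show "\<exists>(i::nat) (j::nat). (a,(c,0)) [^]\<^bsub>HH\<^esub> i = (0,(0,1)) [^]\<^bsub>HH\<^esub> j \<and> (a,(c,0)) [^]\<^bsub>HH\<^esub> i \<noteq> \<one>\<^bsub>HH\<^esub>"
    using hh_ne by (metis HH_one prod.inject)
  show "\<not>(\<exists>k::nat. (0,(0,1)) = (a,(c,0)) [^]\<^bsub>HH\<^esub> k)"
    by (auto simp: pow_x)
  show "\<not>(\<exists>k::nat. (a,(c,0)) = (0,(0,1)) [^]\<^bsub>HH\<^esub> k)"
  proof
    assume "\<exists>k::nat. (a,(c,0)) = (0,(0,1)) [^]\<^bsub>HH\<^esub> k"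
    then obtain k :: nat where k: "(a,(c,0)) = (0,(0,1)) [^]\<^bsub>HH\<^esub> k" by blast
    have "snd ((0::int,(0::int,1::int)) [^]\<^bsub>HH\<^esub> k) = (c,0)" by (simp add: k[symmetric])
    moreover have "0 < 2*hh" using hh_ne by simp
    ultimately have "c = 0 \<or> c = hh"
      using y_pow_snd[of 0 0 k] by simp
    moreover have "fst ((0::int,(0::int,1::int)) [^]\<^bsub>HH\<^esub> k) = a" by (simp add: k[symmetric])
    then have "a = 0" using y_pow_fst[of 0 0 1 k] by simp
    ultimately show False using assms by auto
  qed
qed

definition TT :: nat where "TT = (m+1)^(n-1)"

lemma TT_mod: "int TT mod int m = 1 mod int m"
proof -
  have "int TT = (int m + 1)^(n-1)" by (simp add: TT_def add.commute)
  then have "int TT mod int m = ((int m + 1) mod int m)^(n-1) mod int m" by (metis power_mod)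
  also have "(int m + 1) mod int m = 1 mod int m" by simp
  also have "(1 mod int m)^(n-1) mod int m = 1 mod int m" by (metis power_mod power_one)
  finally show ?thesis .
qed

lemma TT_dvd: "(2::nat)^(n-1) dvd TT"
proof -
  have "2 dvd m + 1" using mo by simp
  then show ?thesis unfolding TT_def by (rule dvd_power_same)
qed

lemma TT_dvd_int: "2*hh dvd int TT"
  using TT_dvd NN(1) by (metis of_nat_dvd_iff of_nat_numeral of_nat_power)

lemma TT_mod4: "(k * TT) mod 4 = 0"
proof -
  have "(4::nat) dvd 2^(n-1)"
  proof -
    have "(2::nat)^2 dvd 2^(n-1)" using n3 by (intro le_imp_power_dvd) auto
    then show ?thesis by simp
  qed
  with TT_dvd have "4 dvd TT" using dvd_trans by blast
  then show ?thesis by simp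
qed

lemma mod_TT: "(int (j * TT) * b) mod int m = (int j * b) mod int m"
proof -
  have "int (j * TT) * b = (int j * b) * int TT" by simp
  then have "(int (j * TT) * b) mod int m = ((int j * b) * (int TT mod int m)) mod int m"
    by (metis mod_mult_right_eq)
  also have "\<dots> = ((int j * b) * (1 mod int m)) mod int m" by (simp only: TT_mod)
  also have "\<dots> = (int j * b) mod int m" by (metis mod_mult_right_eq mult.right_neutral)
  finally show ?thesis .
qed

lemma Q_TT: "(d,e) \<in> carrier (quaternion_group n) \<Longrightarrow> (d,e) [^]\<^bsub>quaternion_group n\<^esub> (k * TT) = (0,0)"
proof -
  assume de: "(d,e) \<in> carrier (quaternion_group n)"
  have "(2::int)^(n-1) dvd int (k * TT)" using TT_dvd_int NN(1) by simp
  then have A: "(int (k*TT) * d) mod 2^(n-1) = 0" by simp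
  show ?thesis
  proof (cases "e = 0")
    case True then show ?thesis using A by (simp add: Q_pow0)
  next
    case False
    then have "e = 1" using de by (simp add: Q_carrier)
    with de show ?thesis using Q_pow1[OF n3, of d "k*TT"] TT_mod4[of k] by (simp add: Q_carrier)
  qed
qed


lemma HH_mem: "(a,(c,e)) \<in> carrier HH \<longleftrightarrow> a \<in> {0..<int m} \<and> 0 \<le> c \<and> c < 2*hh \<and> (e = 0 \<or> e = 1)"
  by (simp only: HH_carrier) auto

lemma E4:
  assumes a: "a \<in> {0..<int m}" and dw: "dedge HH (a,(0,0)) (b,(d,e))" and d': "0 \<le> d'" "d' < 2*hh"
  shows "dedge HH (a,(0,0)) (b,(d',1))"
proof -
  from dw have wc: "(b,(d,e)) \<in> carrier HH"
    and notp: "\<not>(\<exists>k::nat. (a,(0,0)) = (b,(d,e)) [^]\<^bsub>HH\<^esub> k)"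
    and ex: "\<exists>(i::nat) (j::nat). (a,(0,0)) [^]\<^bsub>HH\<^esub> i = (b,(d,e)) [^]\<^bsub>HH\<^esub> j \<and> (a,(0,0)) [^]\<^bsub>HH\<^esub> i \<noteq> \<one>\<^bsub>HH\<^esub>"
    unfolding dedge_def by auto
  from ex obtain i j :: nat where ij: "(a,(0,0)) [^]\<^bsub>HH\<^esub> i = (b,(d,e)) [^]\<^bsub>HH\<^esub> j" "(a,(0,0)) [^]\<^bsub>HH\<^esub> i \<noteq> \<one>\<^bsub>HH\<^esub>"
    by blast
  have bC: "b \<in> {0..<int m}" and deC: "(d,e) \<in> carrier (quaternion_group n)"
    using wc m_pos by (simp_all add: carrier_integer_mod_group)
  have ci: "(a,(0,0)) [^]\<^bsub>HH\<^esub> i = ((int i * a) mod int m, (0,0))" by (simp add: pow_x)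
  have wj: "fst ((b,(d,e)) [^]\<^bsub>HH\<^esub> j) = (int j * b) mod int m" by (rule y_pow_fst)
  have eqm: "(int i * a) mod int m = (int j * b) mod int m" using ij(1) ci wj by (metis fst_conv)
  have ne: "(int i * a) mod int m \<noteq> 0" using ij(2) ci by (auto simp: Q_one)
  show ?thesis unfolding dedge_def
  proof (intro conjI)
    show "(a,(0,0)) \<in> carrier HH" using dw unfolding dedge_def by blast
    show "(b,(d',1)) \<in> carrier HH" using bC d' HH_mem[of b d' 1] by blast
    show "(a,(0::int,0::int)) \<noteq> (b,(d',1))" by simp
    have "(b,(d',1)) [^]\<^bsub>HH\<^esub> (j * TT) = ((int j * b) mod int m, (0,0))"
      using d' TT_mod4[of j] mod_TT[of j b] by (simp add: pow_y)
    then have "(a,(0,0)) [^]\<^bsub>HH\<^esub> i = (b,(d',1)) [^]\<^bsub>HH\<^esub> (j * TT)"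
      using ci eqm by simp
    then show "\<exists>(i::nat) (j::nat). (a,(0,0)) [^]\<^bsub>HH\<^esub> i = (b,(d',1)) [^]\<^bsub>HH\<^esub> j \<and> (a,(0,0)) [^]\<^bsub>HH\<^esub> i \<noteq> \<one>\<^bsub>HH\<^esub>"
      using ij(2) by blast
    show "\<not>(\<exists>k::nat. (b,(d',1)) = (a,(0,0)) [^]\<^bsub>HH\<^esub> k)"
      by (simp add: pow_x)
    show "\<not>(\<exists>k::nat. (a,(0,0)) = (b,(d',1)) [^]\<^bsub>HH\<^esub> k)"
    proof
      assume "\<exists>k::nat. (a,(0,0)) = (b,(d',1)) [^]\<^bsub>HH\<^esub> k"
      then obtain k :: nat where k: "(a,(0,0)) = (b,(d',1)) [^]\<^bsub>HH\<^esub> k" by blast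
      have "fst ((b,(d',1::int)) [^]\<^bsub>HH\<^esub> k) = a" by (simp add: k[symmetric])
      then have ak: "a = (int k * b) mod int m" using y_pow_fst[of b d' 1 k] by simp
      have "(b,(d,e)) [^]\<^bsub>HH\<^esub> (k * TT) = ((int (k * TT) * b) mod int m, (0,0))"
        using Q_TT[OF deC, of k] by (simp add: DirProd_pow)
      also have "\<dots> = (a,(0,0))" using mod_TT[of k b] ak by simp
      finally show False using notp by metis
    qed
  qed
qed

lemma half_mod: "(int i * hh) mod (2*hh) = (if even i then 0 else hh)"
proof (cases "even i")
  case True
  then obtain q where "i = 2*q" by blast
  then have "int i * hh = int q * (2*hh)" by simp
  then show ?thesis using True by simp
next
  case False
  then have "odd (int i)" by simp
  then have "(hh * int i) mod (2*hh) = hh" using odd_times_half hh_ne(4) by blast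
  then show ?thesis using False by (simp add: mult.commute)
qed

lemma no_z: "\<not> dedge HH (0,(hh,0)) w"
proof
  assume "dedge HH (0,(hh,0)) w"
  then obtain i j :: nat where ij: "(0,(hh,0)) [^]\<^bsub>HH\<^esub> i = w [^]\<^bsub>HH\<^esub> j" "(0,(hh,0)) [^]\<^bsub>HH\<^esub> i \<noteq> \<one>\<^bsub>HH\<^esub>"
    and notp: "\<not>(\<exists>k::nat. (0,(hh,0)) = w [^]\<^bsub>HH\<^esub> k)"
    unfolding dedge_def by blast
  have zi: "(0,(hh,0)) [^]\<^bsub>HH\<^esub> i = (0,((int i * hh) mod (2*hh), 0))" by (simp add: pow_x)
  show False
  proof (cases "even i")
    case True
    then show False using ij(2) zi half_mod[of i] by (simp add: Q_one)
  next
    case False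
    then have "(0,(hh,0)) [^]\<^bsub>HH\<^esub> i = (0,(hh,0))" using zi half_mod[of i] by simp
    then show False using ij(1) notp by metis
  qed
qed

lemma classify:
  assumes "dedge HH u w"
  shows "dedge HH u (0,(1,0)) \<or> dedge HH u (0,(0,1)) \<or> (\<exists>b\<in>{0..<int m}. dedge HH u (b,(1,1)) \<and> dedge HH u (b,(0,1)))"
proof -
  obtain a c e where u: "u = (a,(c,e))" by (cases u) auto
  obtain b d f where w: "w = (b,(d,f))" by (cases w) auto
  have "(a,(c,e)) \<in> carrier HH" using assms u unfolding dedge_def by blast
  then have uc: "a \<in> {0..<int m}" "0 \<le> c" "c < 2*hh" "e = 0 \<or> e = 1"
    using HH_mem by blast+
  have "(b,(d,f)) \<in> carrier HH" using assms w unfolding dedge_def by blast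
  then have bc: "b \<in> {0..<int m}"
    using HH_mem by blast
  show ?thesis
  proof (cases "e = 1")
    case True then show ?thesis using E1[OF uc(1-3)] u by simp
  next
    case False
    then have e0: "e = 0" using uc(4) by simp
    show ?thesis
    proof (cases "c = 0")
      case True
      have "dedge HH (a,(0,0)) (b,(d,f))" using assms u w e0 True by simp
      then have "dedge HH (a,(0,0)) (b,(1,1))" "dedge HH (a,(0,0)) (b,(0,1))"
        using E4[OF uc(1)] hh_ge by auto
      then show ?thesis using u e0 True bc by auto
    next
      case False
      have "u \<noteq> (0,(hh,0))" using no_z assms by blast
      then have "dedge HH (a,(c,0)) (0,(0,1))" using E2[OF uc(1)] False uc u e0 by simp
      then show ?thesis using u e0 by simp
    qed
  qed
qed

lemma hh_mods: "hh mod (2*hh) = hh" "(1 + hh) mod (2*hh) = 1 + hh" "(0 + hh) mod (2*hh) = hh"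
  using hh_ge by simp_all

lemma hXY: "dedge HH (0,(1,0)) (0,(0,1))"
proof -
  have "dedge HH (0,(0,1)) (0,(1,0))" by (rule E1) (use hh_ge m_pos in auto)
  then show ?thesis by (rule dedge_sym)
qed

lemma hXW: "b \<in> {0..<int m} \<Longrightarrow> dedge HH (0,(1,0)) (b,(1,1))"
proof -
  assume b: "b \<in> {0..<int m}"
  have "dedge HH (b,(1,1)) (0,(1,0))" by (rule E1) (use hh_ge b in auto)
  then show ?thesis by (rule dedge_sym)
qed

lemma hYW: "b \<in> {0..<int m} \<Longrightarrow> dedge HH (0,(0,1)) (b,(1,1))"
  by (rule E5) (use hh_ge m_pos hh_mods in auto)

lemma hWW: "b1 \<in> {0..<int m} \<Longrightarrow> b2 \<in> {0..<int m} \<Longrightarrow> dedge HH (b1,(1,1)) (b2,(0,1))"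
  by (rule E5) (use hh_ge hh_mods in auto)

lemma H_main:
  assumes "dedge HH u u'" "dedge HH v v'"
  shows "(\<exists>p. dedge HH u p \<and> dedge HH p v) \<or> (\<exists>p q. dedge HH u p \<and> dedge HH p q \<and> dedge HH q v)"
proof -
  let ?X = "(0::int,(1::int,0::int))" and ?Y = "(0::int,(0::int,1::int))"
  have YX: "dedge HH ?Y ?X" using hXY by (rule dedge_sym)
  from classify[OF assms(2)] have cv: "dedge HH ?X v \<or> dedge HH ?Y v \<or>
      (\<exists>b\<in>{0..<int m}. dedge HH (b,(1,1)) v \<and> dedge HH (b,(0,1)) v)"
    by (meson dedge_sym)
  from classify[OF assms(1)] show ?thesis
  proof (elim disjE bexE conjE)
    assume uX: "dedge HH u ?X"
    from cv show ?thesis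
    proof (elim disjE bexE conjE)
      assume "dedge HH ?X v" then show ?thesis using uX by blast
    next
      assume "dedge HH ?Y v" then show ?thesis using uX hXY by blast
    next
      fix b assume b: "b \<in> {0..<int m}" "dedge HH (b,(1,1)) v"
      then show ?thesis using uX hXW[OF b(1)] by blast
    qed
  next
    assume uY: "dedge HH u ?Y"
    from cv show ?thesis
    proof (elim disjE bexE conjE)
      assume "dedge HH ?X v" then show ?thesis using uY YX by blast
    next
      assume "dedge HH ?Y v" then show ?thesis using uY by blast
    next
      fix b assume b: "b \<in> {0..<int m}" "dedge HH (b,(1,1)) v"
      then show ?thesis using uY hYW[OF b(1)] by blast
    qed
  next
    fix b assume b: "b \<in> {0..<int m}" "dedge HH u (b,(1,1))"
    from cv show ?thesis
    proof (elim disjE bexE conjE)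
      assume "dedge HH ?X v" then show ?thesis using b dedge_sym[OF hXW[OF b(1)]] by blast
    next
      assume "dedge HH ?Y v" then show ?thesis using b dedge_sym[OF hYW[OF b(1)]] by blast
    next
      fix b' assume b': "b' \<in> {0..<int m}" "dedge HH (b',(0,1)) v"
      then show ?thesis using b hWW[OF b(1) b'(1)] by blast
    qed
  qed
qed

end


lemma HH_right_one:
  assumes "odd m" "n \<ge> 3" "z \<in> carrier (integer_mod_group m \<times>\<times> quaternion_group n)"
  shows "z \<otimes>\<^bsub>integer_mod_group m \<times>\<times> quaternion_group n\<^esub> \<one>\<^bsub>integer_mod_group m \<times>\<times> quaternion_group n\<^esub> = z"
proof -
  obtain a c e where z: "z = (a,(c,e))" by (cases z) auto
  have "a \<in> {0..<int m}" "0 \<le> c" "c < 2 * hh n" "e = 0 \<or> e = 1"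
    using assms z HH_mem[OF assms(1,2), of a c e] by blast+
  then show ?thesis using z NN[OF assms(1,2)] by (auto simp: Q_mult Q_one)
qed

lemma HH_one_mem:
  assumes "odd m" "n \<ge> 3"
  shows "\<one>\<^bsub>integer_mod_group m \<times>\<times> quaternion_group n\<^esub> \<in> carrier (integer_mod_group m \<times>\<times> quaternion_group n)"
  using HH_mem[OF assms, of 0 0 0] hh_ge[OF assms] m_pos[OF assms] by (simp add: Q_one)

lemma iso_one:
  assumes "group G" "\<phi> \<in> iso G H" "\<one>\<^bsub>H\<^esub> \<in> carrier H" "\<And>z. z \<in> carrier H \<Longrightarrow> z \<otimes>\<^bsub>H\<^esub> \<one>\<^bsub>H\<^esub> = z"
  shows "\<phi> \<one>\<^bsub>G\<^esub> = \<one>\<^bsub>H\<^esub>"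
proof -
  have hom: "\<phi> \<in> hom G H" and bij: "bij_betw \<phi> (carrier G) (carrier H)" using assms(2) by (auto simp: iso_def)
  obtain g where g: "g \<in> carrier G" "\<phi> g = \<one>\<^bsub>H\<^esub>" using bij assms(3) by (metis bij_betw_iff_bijections)
  have one: "\<one>\<^bsub>G\<^esub> \<in> carrier G" using assms(1) by (simp add: group.is_monoid monoid.one_closed)
  have "\<one>\<^bsub>H\<^esub> = \<phi> (\<one>\<^bsub>G\<^esub> \<otimes>\<^bsub>G\<^esub> g)" using g assms(1) by (simp add: group.is_monoid monoid.l_one)
  also have "\<dots> = \<phi> \<one>\<^bsub>G\<^esub> \<otimes>\<^bsub>H\<^esub> \<phi> g" using hom one g(1) by (simp add: hom_mult)
  also have "\<dots> = \<phi> \<one>\<^bsub>G\<^esub>" using g(2) assms(4) hom one by (metis hom_in_carrier)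
  finally show ?thesis by simp
qed

lemma iso_pow:
  assumes "group G" "\<phi> \<in> hom G H" "\<phi> \<one>\<^bsub>G\<^esub> = \<one>\<^bsub>H\<^esub>" "x \<in> carrier G"
  shows "\<phi> (x [^]\<^bsub>G\<^esub> (k::nat)) = \<phi> x [^]\<^bsub>H\<^esub> k"
proof (induction k)
  case 0 then show ?case using assms(3) by simp
next
  case (Suc k)
  have "x [^]\<^bsub>G\<^esub> k \<in> carrier G" using assms(1,4) by (simp add: group.is_monoid monoid.nat_pow_closed)
  then show ?case using Suc assms(2,4) by (simp add: hom_mult)
qed

lemma dedge_transfer:
  assumes G: "group G" and phi: "\<phi> \<in> iso G H" and one: "\<phi> \<one>\<^bsub>G\<^esub> = \<one>\<^bsub>H\<^esub>"
    and x: "x \<in> carrier G" and y: "y \<in> carrier G"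
  shows "dedge G x y \<longleftrightarrow> dedge H (\<phi> x) (\<phi> y)"
proof -
  have hom: "\<phi> \<in> hom G H" and bij: "bij_betw \<phi> (carrier G) (carrier H)" using phi by (auto simp: iso_def)
  have inj: "inj_on \<phi> (carrier G)" using bij by (simp add: bij_betw_def)
  have pc: "\<And>z (k::nat). z \<in> carrier G \<Longrightarrow> z [^]\<^bsub>G\<^esub> k \<in> carrier G"
    using G by (simp add: group.is_monoid monoid.nat_pow_closed)
  have onec: "\<one>\<^bsub>G\<^esub> \<in> carrier G" using G by (simp add: group.is_monoid monoid.one_closed)
  have pw: "\<And>z (k::nat). z \<in> carrier G \<Longrightarrow> \<phi> (z [^]\<^bsub>G\<^esub> k) = \<phi> z [^]\<^bsub>H\<^esub> k"
    using iso_pow[OF G hom one] by blast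
  have eqv: "\<And>a b. a \<in> carrier G \<Longrightarrow> b \<in> carrier G \<Longrightarrow> \<phi> a = \<phi> b \<longleftrightarrow> a = b"
    using inj by (meson inj_on_eq_iff)
  have c1: "\<phi> x \<in> carrier H" "\<phi> y \<in> carrier H" using hom x y by (auto simp: hom_in_carrier)
  have e1: "\<phi> x \<noteq> \<phi> y \<longleftrightarrow> x \<noteq> y" using eqv x y by blast
  have e2: "\<And>(i::nat) (j::nat). \<phi> x [^]\<^bsub>H\<^esub> i = \<phi> y [^]\<^bsub>H\<^esub> j \<longleftrightarrow> x [^]\<^bsub>G\<^esub> i = y [^]\<^bsub>G\<^esub> j"
    using eqv pc pw x y by metis
  have e3: "\<And>(i::nat). \<phi> x [^]\<^bsub>H\<^esub> i \<noteq> \<one>\<^bsub>H\<^esub> \<longleftrightarrow> x [^]\<^bsub>G\<^esub> i \<noteq> \<one>\<^bsub>G\<^esub>"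
    using eqv pc pw x onec one by metis
  have e4: "\<And>(k::nat). \<phi> y = \<phi> x [^]\<^bsub>H\<^esub> k \<longleftrightarrow> y = x [^]\<^bsub>G\<^esub> k"
    using eqv pc pw x y by metis
  have e5: "\<And>(k::nat). \<phi> x = \<phi> y [^]\<^bsub>H\<^esub> k \<longleftrightarrow> x = y [^]\<^bsub>G\<^esub> k"
    using eqv pc pw x y by metis
  show ?thesis unfolding dedge_def using c1 e1 e2 e3 e4 e5 x y by simp
qed

lemma diff_edges_char:
  assumes G: "group G" and fin: "finite (carrier G)"
  shows "(x,y) \<in> diff_edges G \<longleftrightarrow> dedge G x y"
proof -
  have gen: "\<And>z. z \<in> carrier G \<Longrightarrow> generate G {z} = {z [^]\<^bsub>G\<^esub> k | k. k \<in> (UNIV :: nat set)}"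
    using group.generate_pow_on_finite_carrier[OF G fin] by blast
  show ?thesis
  proof
    assume "(x,y) \<in> diff_edges G"
    then have ipg: "ipg_adj G x y" and npg: "\<not> pg_adj G x y" by (auto simp: diff_edges_def)
    from ipg have xy: "x \<in> carrier G" "y \<in> carrier G" "x \<noteq> y" by (auto simp: ipg_adj_def)
    from npg xy have np: "\<not>(\<exists>k::nat. y = x [^]\<^bsub>G\<^esub> k)" "\<not>(\<exists>k::nat. x = y [^]\<^bsub>G\<^esub> k)"
      by (auto simp: pg_adj_def)
    have "x \<noteq> \<one>\<^bsub>G\<^esub>" using np(2) by (metis nat_pow_0)
    moreover have "y \<noteq> \<one>\<^bsub>G\<^esub>" using np(1) by (metis nat_pow_0)
    ultimately have "generate G {x} \<inter> generate G {y} \<noteq> {\<one>\<^bsub>G\<^esub>}" using ipg by (auto simp: ipg_adj_def)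
    moreover have "\<one>\<^bsub>G\<^esub> \<in> generate G {x} \<inter> generate G {y}"
      using gen xy by (auto intro!: exI[of _ "0::nat"])
    ultimately obtain z where "z \<in> generate G {x}" "z \<in> generate G {y}" "z \<noteq> \<one>\<^bsub>G\<^esub>" by blast
    have zx: "z \<in> {x [^]\<^bsub>G\<^esub> k | k. k \<in> (UNIV :: nat set)}" using gen[OF xy(1)] \<open>z \<in> generate G {x}\<close> by simp
    have zy: "z \<in> {y [^]\<^bsub>G\<^esub> k | k. k \<in> (UNIV :: nat set)}" using gen[OF xy(2)] \<open>z \<in> generate G {y}\<close> by simp
    obtain i :: nat where "z = x [^]\<^bsub>G\<^esub> i" using zx by blast
    moreover obtain j :: nat where "z = y [^]\<^bsub>G\<^esub> j" using zy by blast
    ultimately have "x [^]\<^bsub>G\<^esub> i = y [^]\<^bsub>G\<^esub> j" by simp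
    then have "\<exists>(i::nat) (j::nat). x [^]\<^bsub>G\<^esub> i = y [^]\<^bsub>G\<^esub> j \<and> x [^]\<^bsub>G\<^esub> i \<noteq> \<one>\<^bsub>G\<^esub>"
      using \<open>z \<noteq> \<one>\<^bsub>G\<^esub>\<close> \<open>z = x [^]\<^bsub>G\<^esub> i\<close> by metis
    then show "dedge G x y" unfolding dedge_def using xy np by blast
  next
    assume d: "dedge G x y"
    then have xy: "x \<in> carrier G" "y \<in> carrier G" "x \<noteq> y"
      and np: "\<not>(\<exists>k::nat. y = x [^]\<^bsub>G\<^esub> k)" "\<not>(\<exists>k::nat. x = y [^]\<^bsub>G\<^esub> k)"
      by (auto simp: dedge_def)
    from d obtain i j :: nat where ij: "x [^]\<^bsub>G\<^esub> i = y [^]\<^bsub>G\<^esub> j" "x [^]\<^bsub>G\<^esub> i \<noteq> \<one>\<^bsub>G\<^esub>"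
      unfolding dedge_def by blast
    have "x [^]\<^bsub>G\<^esub> i \<in> generate G {x}" using gen[OF xy(1)] by blast
    moreover have "x [^]\<^bsub>G\<^esub> i \<in> generate G {y}" using gen[OF xy(2)] ij(1) by blast
    ultimately have "x [^]\<^bsub>G\<^esub> i \<in> generate G {x} \<inter> generate G {y}" by blast
    then have "generate G {x} \<inter> generate G {y} \<noteq> {\<one>\<^bsub>G\<^esub>}" using ij(2) by blast
    then have "ipg_adj G x y" using xy by (simp add: ipg_adj_def)
    moreover have "\<not> pg_adj G x y" using np by (simp add: pg_adj_def)
    ultimately show "(x,y) \<in> diff_edges G" by (simp add: diff_edges_def)
  qed
qed

lemma relpow2: "(a,b) \<in> E \<Longrightarrow> (b,c) \<in> E \<Longrightarrow> (a,c) \<in> E ^^ 2"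
  by (metis numeral_2_eq_2 relpow_0_I relpow_Suc_I)

lemma relpow3: "(a,b) \<in> E \<Longrightarrow> (b,c) \<in> E \<Longrightarrow> (c,d) \<in> E \<Longrightarrow> (a,d) \<in> E ^^ 3"
  by (metis numeral_3_eq_3 relpow_0_I relpow_Suc_I)

theorem lemma4p12:
  fixes G :: "('a, 'b) monoid_scheme" and m n :: nat
  assumes "group G"
    and "G \<cong> integer_mod_group m \<times>\<times> quaternion_group n"
    and "odd m" and "n \<ge> 3"
  shows "diff_vertices G \<noteq> {} \<and>
         (\<forall>u \<in> diff_vertices G. \<forall>v \<in> diff_vertices G.
            \<exists>k \<le> 3. (u, v) \<in> (diff_edges G) ^^ k)"
proof -
  let ?H = "integer_mod_group m \<times>\<times> quaternion_group n"
  note mo = assms(3) and n3 = assms(4)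
  obtain \<phi> where phi: "\<phi> \<in> iso G ?H" using assms(2) unfolding is_iso_def by blast
  have hom: "\<phi> \<in> hom G ?H" and bij: "bij_betw \<phi> (carrier G) (carrier ?H)" using phi by (auto simp: iso_def)
  have finH: "finite (carrier ?H)" using HH_carrier[OF mo n3] by simp
  have fin: "finite (carrier G)" using iso_finite[OF assms(2)] finH by simp
  have one: "\<phi> \<one>\<^bsub>G\<^esub> = \<one>\<^bsub>?H\<^esub>"
    by (rule iso_one[OF assms(1) phi HH_one_mem[OF mo n3] HH_right_one[OF mo n3]])
  define \<psi> where "\<psi> = inv_into (carrier G) \<phi>"
  have psi: "\<And>p. p \<in> carrier ?H \<Longrightarrow> \<psi> p \<in> carrier G \<and> \<phi> (\<psi> p) = p"
  proof -
    fix p assume p: "p \<in> carrier ?H"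
    have im: "\<phi> ` carrier G = carrier ?H" using bij by (simp add: bij_betw_def)
    then show "\<psi> p \<in> carrier G \<and> \<phi> (\<psi> p) = p" using p unfolding \<psi>_def
      by (metis inv_into_into f_inv_into_f)
  qed
  have tr: "\<And>x y. x \<in> carrier G \<Longrightarrow> y \<in> carrier G \<Longrightarrow> (x,y) \<in> diff_edges G \<longleftrightarrow> dedge ?H (\<phi> x) (\<phi> y)"
    using diff_edges_char[OF assms(1) fin] dedge_transfer[OF assms(1) phi one] by blast
  have trp: "\<And>x p. x \<in> carrier G \<Longrightarrow> p \<in> carrier ?H \<Longrightarrow> dedge ?H (\<phi> x) p \<Longrightarrow> (x, \<psi> p) \<in> diff_edges G"
    using tr psi by metis
  have trp': "\<And>x p. x \<in> carrier G \<Longrightarrow> p \<in> carrier ?H \<Longrightarrow> dedge ?H p (\<phi> x) \<Longrightarrow> (\<psi> p, x) \<in> diff_edges G"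
    using tr psi by metis
  have trpq: "\<And>p q. p \<in> carrier ?H \<Longrightarrow> q \<in> carrier ?H \<Longrightarrow> dedge ?H p q \<Longrightarrow> (\<psi> p, \<psi> q) \<in> diff_edges G"
    using tr psi by metis
  have Ecar: "\<And>x y. (x,y) \<in> diff_edges G \<Longrightarrow> x \<in> carrier G \<and> y \<in> carrier G"
    by (auto simp: diff_edges_def ipg_adj_def)
  have dcar: "\<And>p q. dedge ?H p q \<Longrightarrow> p \<in> carrier ?H \<and> q \<in> carrier ?H"
    by (auto simp: dedge_def)
  have "(\<psi> (0,(1,0)), \<psi> (0,(0,1))) \<in> diff_edges G"
    using trpq dcar hXY[OF mo n3] by blast
  then have ne: "diff_vertices G \<noteq> {}" unfolding diff_vertices_def by blast
  have "\<exists>k \<le> 3. (u, v) \<in> (diff_edges G) ^^ k" if u: "u \<in> diff_vertices G" and v: "v \<in> diff_vertices G" for u v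
  proof -
    obtain u' where uu: "(u,u') \<in> diff_edges G" using u unfolding diff_vertices_def by blast
    obtain v' where vv: "(v,v') \<in> diff_edges G" using v unfolding diff_vertices_def by blast
    have uc: "u \<in> carrier G" using Ecar[OF uu] by (rule conjunct1)
    have vc: "v \<in> carrier G" using Ecar[OF vv] by (rule conjunct1)
    have "dedge ?H (\<phi> u) (\<phi> u')" using tr uu Ecar by blast
    moreover have "dedge ?H (\<phi> v) (\<phi> v')" using tr vv Ecar by blast
    ultimately have "(\<exists>p. dedge ?H (\<phi> u) p \<and> dedge ?H p (\<phi> v)) \<or>
        (\<exists>p q. dedge ?H (\<phi> u) p \<and> dedge ?H p q \<and> dedge ?H q (\<phi> v))"
      by (rule H_main[OF mo n3])
    then show ?thesis
    proof (elim disjE exE conjE)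
      fix p assume d1: "dedge ?H (\<phi> u) p" and d2: "dedge ?H p (\<phi> v)"
      have pc: "p \<in> carrier ?H" using dcar[OF d1] by (rule conjunct2)
      have "(u, \<psi> p) \<in> diff_edges G" "(\<psi> p, v) \<in> diff_edges G"
        using trp[OF uc pc d1] trp'[OF vc pc d2] by auto
      then have "(u,v) \<in> diff_edges G ^^ 2" by (rule relpow2)
      then show ?thesis by (intro exI[of _ "2::nat"]) simp
    next
      fix p q assume d1: "dedge ?H (\<phi> u) p" and d2: "dedge ?H p q" and d3: "dedge ?H q (\<phi> v)"
      have pc: "p \<in> carrier ?H" using dcar[OF d1] by (rule conjunct2)
      have qc: "q \<in> carrier ?H" using dcar[OF d3] by (rule conjunct1)
      have "(u, \<psi> p) \<in> diff_edges G" "(\<psi> p, \<psi> q) \<in> diff_edges G" "(\<psi> q, v) \<in> diff_edges G"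
        using trp[OF uc pc d1] trpq[OF pc qc d2] trp'[OF vc qc d3] by auto
      then have "(u,v) \<in> diff_edges G ^^ 3" by (rule relpow3)
      then show ?thesis by (intro exI[of _ "3::nat"]) simp
    qed
  qed
  with ne show ?thesis by blast
qed

end
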